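(* Let $n=p'^{\,2}q$ where $p',q$ are distinct primes both at least $7$, and let $A=S(n)$. Then $D_A(n)=5$.
   Context: $\mathbb{Z}_n$ is the integers mod $n$, $U(n)$ its unit group. For nonempty $A\subseteq\mathbb{Z}_n\setminus\{0\}$, a sequence $(x_1,\ldots,x_k)$ is an $A$-weighted zero-sum sequence if $\sum a_ix_i=0$ for some $a_i\in A$; $D_A(n)$ is the least $k$ such that every length-$k$ sequence in $\mathbb{Z}_n$ has a nonempty $A$-weighted zero-sum subsequence. For odd $n=\prod p_i^{r_i}$ and $a\in U(n)$, $\left(\frac{a}{n}\right)=\prod\left(\frac{a}{p_i}\right)^{r_i}$ (Legendre symbols of images mod $p_i$), and $S(n)$ is the kernel of $a\mapsto\left(\frac{a}{n}\right)$ on $U(n)$. *)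

theory Defs
  imports "HOL-Number_Theory.Number_Theory"
begin

text \<open>Z_n is represented by the residues {0..<n} (as naturals).
  A sequence of length k in Z_n is a list xs of residues with length xs = k.\<close>

definition has_weighted_zs_subseq :: "nat \<Rightarrow> nat set \<Rightarrow> nat list \<Rightarrow> bool" where
  "has_weighted_zs_subseq n A xs \<longleftrightarrow>
     (\<exists>I a. I \<subseteq> {..<length xs} \<and> I \<noteq> {} \<and> (\<forall>i\<in>I. a i \<in> A) \<and>
            (\<Sum>i\<in>I. a i * xs ! i) mod n = 0)"

definition davenport_weighted :: "nat \<Rightarrow> nat set \<Rightarrow> nat" where
  "davenport_weighted n A =
     (LEAST k. \<forall>xs. length xs = k \<and> set xs \<subseteq> {0..<n} \<longrightarrow> has_weighted_zs_subseq n A xs)"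

definition gen_symbol :: "nat \<Rightarrow> nat \<Rightarrow> int" where
  "gen_symbol a n = (\<Prod>p\<in>prime_factors n. Legendre (int a) (int p) ^ multiplicity p n)"

definition S_set :: "nat \<Rightarrow> nat set" where
  "S_set n = {a \<in> {0..<n}. coprime a n \<and> gen_symbol a n = 1}"

end

theory Submission
  imports Defs
begin


lemma Leg_cong:
  assumes "[a = b] (mod m)"
  shows "Legendre a m = Legendre b m"
proof -
  have "[a = 0] (mod m) \<longleftrightarrow> [b = 0] (mod m)"
    using assms cong_sym cong_trans by blast
  moreover have "QuadRes m a \<longleftrightarrow> QuadRes m b"
    unfolding QuadRes_def using assms cong_sym cong_trans by blast
  ultimately show ?thesis unfolding Legendre_def by simp
qed

lemma Leg_vals: "Legendre a m \<in> {-1,0,1}"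
  unfolding Legendre_def by auto

lemma Leg_zero_iff: "Legendre a m = 0 \<longleftrightarrow> m dvd a"
  unfolding Legendre_def by (auto simp: cong_0_iff)

lemma small_cong_eq:
  fixes x y q :: int
  assumes "x \<in> {-1,0,1}" "y \<in> {-1,0,1}" "q > 2" "[x = y] (mod q)"
  shows "x = y"
proof (rule ccontr)
  assume "x \<noteq> y"
  hence "x - y \<noteq> 0" by simp
  moreover have "q dvd (x - y)" using assms(4) by (simp add: cong_iff_dvd_diff cong_sym_eq)
  ultimately have "\<bar>q\<bar> \<le> \<bar>x - y\<bar>" using dvd_imp_le_int by blast
  moreover have "\<bar>x - y\<bar> \<le> 2" using assms(1,2) by auto
  ultimately show False using assms(3) by simp
qed

lemma Leg_mult:
  fixes q :: nat
  assumes "prime q" "q > 2"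
  shows "Legendre (a * b) (int q) = Legendre a (int q) * Legendre b (int q)"
proof -
  have "[Legendre (a*b) (int q) = (a*b) ^ ((q - 1) div 2)] (mod int q)"
    using euler_criterion[of q "a*b"] assms by simp
  moreover have "[Legendre a (int q) * Legendre b (int q) = a ^ ((q - 1) div 2) * b ^ ((q - 1) div 2)] (mod int q)"
    using euler_criterion[of q a] euler_criterion[of q b] assms
    by (intro cong_mult) simp_all
  ultimately have "[Legendre (a*b) (int q) = Legendre a (int q) * Legendre b (int q)] (mod int q)"
    by (metis cong_sym cong_trans power_mult_distrib)
  moreover have "Legendre a (int q) * Legendre b (int q) \<in> {-1,0,1}"
    using Leg_vals[of a "int q"] Leg_vals[of b "int q"] by auto
  ultimately show ?thesis using small_cong_eq Leg_vals assms(2) by (metis of_nat_less_iff of_nat_numeral)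
qed

lemma Leg_one: "q > 1 \<Longrightarrow> Legendre 1 q = 1"
  unfolding Legendre_def QuadRes_def
  by (auto simp: cong_def intro!: exI[of _ 1])

lemma Leg_sq: fixes q :: int assumes "prime q" "\<not> q dvd a" shows "Legendre (a^2) q = 1"
  using assms prime_dvd_power unfolding Legendre_def QuadRes_def by (auto simp: cong_0_iff intro!: exI[of _ a])

lemma NR_exists:
  fixes q :: nat
  assumes "prime q" "q > 2"
  shows "\<exists>g. Legendre g (int q) = -1"
proof -
  obtain g where g: "residue_primroot q g" using prime_primitive_root_exists[of q] assms by fastforce
  hence cop: "coprime q g" and ordg: "ord q g = q - 1"
    by (auto simp: residue_primroot_def totient_prime assms(1))
  define h where "h = (q - 1) div 2"
  have "odd q" using assms prime_odd_nat by blast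
  hence h0: "0 < h" "h < q - 1" using assms(2) unfolding h_def by (auto elim!: oddE)
  have nc: "[g ^ h \<noteq> 1] (mod q)" using ord_minimal[of h q g] h0 ordg by simp
  have eu: "[Legendre (int g) (int q) = int g ^ h] (mod int q)"
    using euler_criterion[of q "int g"] assms unfolding h_def by simp
  have nz: "\<not> int q dvd int g"
    using cop assms(1) by (metis coprime_absorb_left int_dvd_int_iff not_prime_unit)
  have "Legendre (int g) (int q) \<noteq> 1"
  proof
    assume "Legendre (int g) (int q) = 1"
    hence "[int g ^ h = 1] (mod int q)" using eu cong_sym by fastforce
    hence "[g ^ h = 1] (mod q)" by (metis cong_int_iff of_nat_1 of_nat_power)
    thus False using nc by simp
  qed
  moreover have "Legendre (int g) (int q) \<noteq> 0" using nz Leg_zero_iff by blast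
  ultimately show ?thesis using Leg_vals[of "int g" "int q"] by blast
qed

lemma prime_not_dvd_small:
  fixes q :: nat
  assumes "prime q" "q \<ge> 7" "0 < c" "c < 7"
  shows "\<not> int q dvd c"
proof
  assume "int q dvd c"
  hence "int q \<le> c" using assms(3) zdvd_imp_le by blast
  thus False using assms by simp
qed

lemma Leg_inv:
  fixes q :: nat
  assumes "prime q" "q > 2" "\<not> int q dvd x"
  shows "\<exists>u. [x*u = 1] (mod int q) \<and> Legendre u (int q) = Legendre x (int q)"
proof -
  have "coprime x (int q)" using assms
    using prime_imp_coprime[of "int q" x] coprime_commute by auto
  then obtain u where u: "[x*u = 1] (mod int q)" using cong_solve_coprime_int by blast
  have "Legendre (x*u) (int q) = 1" using Leg_cong[OF u] Leg_one assms by simp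
  hence "Legendre x (int q) * Legendre u (int q) = 1" using Leg_mult assms by simp
  hence "Legendre u (int q) = Legendre x (int q)"
    using Leg_vals[of x "int q"] Leg_vals[of u "int q"] by auto
  thus ?thesis using u by blast
qed

lemma cong_dvdI:
  fixes x y m :: int
  assumes "m dvd (x - y)"
  shows "[x = y] (mod m)"
  using assms by (simp add: cong_iff_dvd_diff)

lemma cong_dvdD:
  fixes x y m :: int
  assumes "[x = y] (mod m)"
  shows "m dvd (x - y)"
  using assms by (simp add: cong_iff_dvd_diff)

lemma QQ_one:
  fixes q :: nat
  assumes "prime q" "q \<ge> 7" "Legendre z (int q) = 1"
  shows "\<exists>a b. Legendre a (int q) = 1 \<and> Legendre b (int q) = 1 \<and> [a + b = z] (mod int q)"
proof -
  have q2: "q > 2" using assms by simp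
  have n5: "\<not> int q dvd 5" using prime_not_dvd_small assms by simp
  have n3: "\<not> int q dvd 3" using prime_not_dvd_small assms by simp
  have n4: "\<not> int q dvd 4" using prime_not_dvd_small assms by simp
  obtain w where w: "[5*w = 1] (mod int q)" using Leg_inv[OF assms(1) q2 n5] by blast
  have nw: "\<not> int q dvd w"
  proof
    assume "int q dvd w"
    hence "int q dvd 5*w" by simp
    moreover have "int q dvd 5*w - 1" using cong_dvdD[OF w] .
    ultimately have "int q dvd 5*w - (5*w - 1)" by (rule dvd_diff)
    hence "int q dvd 1" by simp
    thus False using assms by simp
  qed
  have pq: "prime (int q)" using assms by simp
  have L9: "Legendre (3^2) (int q) = 1" using Leg_sq[OF pq n3] .
  have L16: "Legendre (4^2) (int q) = 1" using Leg_sq[OF pq n4] .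
  have Lw: "Legendre (w^2) (int q) = 1" using Leg_sq[OF pq nw] .
  define a where "a = 3^2 * (z * w^2)"
  define b where "b = 4^2 * (z * w^2)"
  have "Legendre a (int q) = 1" unfolding a_def using Leg_mult[OF assms(1) q2] L9 Lw assms(3) by simp
  moreover have "Legendre b (int q) = 1" unfolding b_def using Leg_mult[OF assms(1) q2] L16 Lw assms(3) by simp
  moreover have "[a + b = z] (mod int q)"
  proof (rule cong_dvdI)
    have "a + b - z = z * (5*w + 1) * (5*w - 1)" unfolding a_def b_def by (simp add: algebra_simps power2_eq_square)
    thus "int q dvd a + b - z" using cong_dvdD[OF w] by (simp only: dvd_mult)
  qed
  ultimately show ?thesis by blast
qed

lemma QQ_NR:
  fixes q :: nat
  assumes "prime q" "q \<ge> 7"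
  shows "\<exists>a b. Legendre a (int q) = 1 \<and> Legendre b (int q) = 1 \<and> Legendre (a + b) (int q) = -1"
proof (rule ccontr)
  assume H: "\<not> ?thesis"
  have q2: "q > 2" using assms by simp
  have "Legendre (int k) (int q) \<noteq> -1" for k
  proof (induction k)
    case 0
    then show ?case by (simp add: Legendre_def)
  next
    case (Suc k)
    show ?case
    proof (cases "int q dvd int k")
      case True
      hence "[int (Suc k) = 1] (mod int q)" by (simp add: cong_dvdI)
      hence "Legendre (int (Suc k)) (int q) = Legendre 1 (int q)" by (rule Leg_cong)
      hence "Legendre (int (Suc k)) (int q) = 1" using Leg_one[of "int q"] q2 by simp
      thus ?thesis by simp
    next
      case False
      hence "Legendre (int k) (int q) \<noteq> 0" by (simp add: Leg_zero_iff)
      hence "Legendre (int k) (int q) = 1" using Suc Leg_vals[of "int k" "int q"] by simp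
      moreover have "Legendre 1 (int q) = 1" using Leg_one q2 by simp
      ultimately have "Legendre (int k + 1) (int q) \<noteq> -1" using H by blast
      thus ?thesis by (simp add: add.commute)
    qed
  qed
  moreover obtain g where g: "Legendre g (int q) = -1" using NR_exists[OF assms(1) q2] by blast
  moreover have "[g = int (nat (g mod int q))] (mod int q)"
    using q2 by (simp add: cong_def)
  hence "Legendre g (int q) = Legendre (int (nat (g mod int q))) (int q)" by (rule Leg_cong)
  ultimately show False by metis
qed

lemma QQ:
  fixes q :: nat
  assumes "prime q" "q \<ge> 7" "\<not> int q dvd z"
  shows "\<exists>a b. Legendre a (int q) = 1 \<and> Legendre b (int q) = 1 \<and> [a + b = z] (mod int q)"
proof (cases "Legendre z (int q) = 1")
  case True
  then show ?thesis using QQ_one assms by blast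
next
  case False
  have q2: "q > 2" using assms by simp
  have "Legendre z (int q) \<noteq> 0" using assms(3) by (simp add: Leg_zero_iff)
  hence Lz: "Legendre z (int q) = -1" using False Leg_vals[of z "int q"] by simp
  obtain a b where ab: "Legendre a (int q) = 1" "Legendre b (int q) = 1" "Legendre (a + b) (int q) = -1"
    using QQ_NR assms by blast
  have "\<not> int q dvd (a + b)" using ab(3) by (simp add: Leg_zero_iff[symmetric])
  then obtain u where u: "[(a+b)*u = 1] (mod int q)" "Legendre u (int q) = Legendre (a+b) (int q)"
    using Leg_inv[OF assms(1) q2] by blast
  define t where "t = z * u"
  have Lt: "Legendre t (int q) = 1" unfolding t_def using Leg_mult[OF assms(1) q2] Lz u(2) ab(3) by simp
  have "Legendre (t*a) (int q) = 1" "Legendre (t*b) (int q) = 1"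
    using Leg_mult[OF assms(1) q2] Lt ab by simp_all
  moreover have "[t*a + t*b = z] (mod int q)"
  proof (rule cong_dvdI)
    have "t*a + t*b - z = z * ((a+b)*u - 1)" unfolding t_def by (simp add: algebra_simps)
    thus "int q dvd t*a + t*b - z" using cong_dvdD[OF u(1)] by (simp only: dvd_mult)
  qed
  ultimately show ?thesis by blast
qed



lemma P2:
  fixes q :: nat
  assumes q: "prime q" "q \<ge> 7" and v: "\<not> int q dvd v1" "\<not> int q dvd v2"
    and L12: "Legendre (v1*v2) (int q) = 1" and s: "\<not> int q dvd s"
  shows "\<exists>b1 b2. Legendre b1 (int q) = 1 \<and> Legendre b2 (int q) = 1 \<and> [b1*v1 + b2*v2 = s] (mod int q)"
proof -
  have q2: "q > 2" using q by simp
  have pq: "prime (int q)" using q by simp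
  obtain u where u: "[v1*u = 1] (mod int q)" "Legendre u (int q) = Legendre v1 (int q)"
    using Leg_inv[OF q(1) q2 v(1)] by blast
  have nu: "\<not> int q dvd u"
  proof
    assume "int q dvd u"
    hence "int q dvd v1*u" by simp
    moreover have "int q dvd v1*u - 1" using cong_dvdD[OF u(1)] .
    ultimately have "int q dvd v1*u - (v1*u - 1)" by (rule dvd_diff)
    thus False using q2 by simp
  qed
  define c where "c = v2 * u"
  have nc: "\<not> int q dvd c" unfolding c_def using v(2) nu pq by (simp add: prime_dvd_mult_iff)
  have Lc: "Legendre c (int q) = 1"
    unfolding c_def using Leg_mult[OF q(1) q2] u(2) L12 by (simp add: mult.commute)
  obtain d where d: "[c*d = 1] (mod int q)" "Legendre d (int q) = Legendre c (int q)"
    using Leg_inv[OF q(1) q2 nc] by blast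
  have nsu: "\<not> int q dvd s*u" using s nu pq by (simp add: prime_dvd_mult_iff)
  obtain a b where ab: "Legendre a (int q) = 1" "Legendre b (int q) = 1" "[a + b = s*u] (mod int q)"
    using QQ[OF q nsu] by blast
  have Lbd: "Legendre (b*d) (int q) = 1" using Leg_mult[OF q(1) q2] ab(2) d(2) Lc by simp
  have D1: "int q dvd (a + b - s*u)" using cong_dvdD[OF ab(3)] .
  have D2: "int q dvd (v1*u - 1)" using cong_dvdD[OF u(1)] .
  have D3: "int q dvd (c*d - 1)" using cong_dvdD[OF d(1)] .
  have E1: "d*v2 - v1 = v1*(c*d - 1) - d*v2*(v1*u - 1)" unfolding c_def by (simp add: algebra_simps)
  have D4: "int q dvd (d*v2 - v1)" unfolding E1 by (rule dvd_diff[OF dvd_mult[OF D3] dvd_mult[OF D2]])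
  have E2: "a*v1 + (b*d)*v2 - s = v1*(a + b - s*u) + b*(d*v2 - v1) + s*(v1*u - 1)"
    by (simp add: algebra_simps)
  have "int q dvd (a*v1 + (b*d)*v2 - s)" unfolding E2 using D1 D2 D4
    by (intro dvd_add dvd_mult) simp_all
  hence "[a*v1 + (b*d)*v2 = s] (mod int q)" by (rule cong_dvdI)
  thus ?thesis using ab(1) Lbd by blast
qed

lemma B3aux:
  fixes q :: nat
  assumes q: "prime q" "q \<ge> 7" and v: "\<not> int q dvd v1" "\<not> int q dvd v2" "\<not> int q dvd v3"
    and L12: "Legendre (v1*v2) (int q) = 1"
  shows "\<exists>b1 b2 b3. Legendre b1 (int q) = 1 \<and> Legendre b2 (int q) = 1 \<and> Legendre b3 (int q) = 1
           \<and> [b1*v1 + b2*v2 + b3*v3 = t] (mod int q)"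
proof -
  have q2: "q > 2" using q by simp
  have pq: "prime (int q)" using q by simp
  have L1: "Legendre 1 (int q) = 1" using Leg_one q2 by simp
  have L4: "Legendre (2^2) (int q) = 1" by (rule Leg_sq[OF pq]) (use prime_not_dvd_small[OF q, of 2] in simp)
  obtain b3 where b3: "Legendre b3 (int q) = 1" "\<not> int q dvd (t - b3*v3)"
  proof (cases "int q dvd (t - 1*v3)")
    case True
    have "\<not> int q dvd (t - 4*v3)"
    proof
      assume "int q dvd (t - 4*v3)"
      with True have "int q dvd ((t - 1*v3) - (t - 4*v3))" by (rule dvd_diff)
      hence "int q dvd 3*v3" by simp
      thus False using v(3) prime_not_dvd_small[OF q, of 3] pq by (simp add: prime_dvd_mult_iff)
    qed
    thus ?thesis using that[of 4] L4 by simp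
  next
    case False
    thus ?thesis using that[of 1] L1 by simp
  qed
  obtain b1 b2 where b12: "Legendre b1 (int q) = 1" "Legendre b2 (int q) = 1"
    "[b1*v1 + b2*v2 = t - b3*v3] (mod int q)"
    using P2[OF q v(1,2) L12 b3(2)] by blast
  have "[b1*v1 + b2*v2 + b3*v3 = t - b3*v3 + b3*v3] (mod int q)"
    using b12(3) by (intro cong_add) simp_all
  thus ?thesis using b12(1,2) b3(1) by auto
qed

lemma B3:
  fixes q :: nat
  assumes q: "prime q" "q \<ge> 7" and v: "\<not> int q dvd v1" "\<not> int q dvd v2" "\<not> int q dvd v3"
  shows "\<exists>b1 b2 b3. Legendre b1 (int q) = 1 \<and> Legendre b2 (int q) = 1 \<and> Legendre b3 (int q) = 1
           \<and> [b1*v1 + b2*v2 + b3*v3 = t] (mod int q)"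
proof -
  have q2: "q > 2" using q by simp
  have LL: "Legendre v (int q) = 1 \<or> Legendre v (int q) = -1" if "\<not> int q dvd v" for v
    using that Leg_vals[of v "int q"] by (auto simp: Leg_zero_iff[symmetric])
  have M: "Legendre (x*y) (int q) = Legendre x (int q) * Legendre y (int q)" for x y
    using Leg_mult[OF q(1) q2] .
  consider "Legendre (v1*v2) (int q) = 1" | "Legendre (v1*v3) (int q) = 1" | "Legendre (v2*v3) (int q) = 1"
    using LL[OF v(1)] LL[OF v(2)] LL[OF v(3)] unfolding M by auto
  then show ?thesis
  proof cases
    case 1
    then show ?thesis using B3aux[OF q v 1] by blast
  next
    case 2
    obtain b1 b3 b2 where "Legendre b1 (int q) = 1" "Legendre b3 (int q) = 1" "Legendre b2 (int q) = 1"
           "[b1*v1 + b3*v3 + b2*v2 = t] (mod int q)"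
      using B3aux[OF q v(1) v(3) v(2) 2, of t] by blast
    then show ?thesis by (metis add.commute add.left_commute)
  next
    case 3
    obtain b2 b3 b1 where "Legendre b2 (int q) = 1" "Legendre b3 (int q) = 1" "Legendre b1 (int q) = 1"
           "[b2*v2 + b3*v3 + b1*v1 = t] (mod int q)"
      using B3aux[OF q v(2) v(3) v(1) 3, of t] by blast
    then show ?thesis by (metis add.commute add.left_commute)
  qed
qed

lemma CORE:
  fixes p :: nat and y1 y2 t :: int
  assumes p: "prime p" "p \<ge> 3" and y: "coprime y1 (int p)" "coprime y2 (int p)" and k: "k > 0"
  shows "\<exists>a1 a2. coprime a1 (int p) \<and> coprime a2 (int p) \<and> [a1*y1 + a2*y2 = t] (mod (int p)^k)"
proof -
  have pp: "prime (int p)" using p by simp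
  have ny2: "\<not> int p dvd y2" using y(2) pp
    by (metis coprime_commute not_prime_unit coprime_absorb_left)
  obtain a2 where a2: "coprime a2 (int p)" "\<not> int p dvd (t - a2*y2)"
  proof (cases "int p dvd (t - 1*y2)")
    case True
    have "\<not> int p dvd (t - 2*y2)"
    proof
      assume "int p dvd (t - 2*y2)"
      with True have "int p dvd ((t - 1*y2) - (t - 2*y2))" by (rule dvd_diff)
      hence "int p dvd 2*y2" by simp
      hence "int p dvd 2" using ny2 pp by (simp add: prime_dvd_mult_iff)
      hence "int p \<le> 2" using zdvd_imp_le[of "int p" 2] by simp
      thus False using p by simp
    qed
    moreover have "coprime (2::int) (int p)"
    proof -
      have "\<not> int p dvd 2"
      proof
        assume "int p dvd 2"
        hence "int p \<le> 2" using zdvd_imp_le[of "int p" 2] by simp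
        thus False using p by simp
      qed
      thus ?thesis using prime_imp_coprime[OF pp] coprime_commute by blast
    qed
    ultimately show ?thesis using that[of 2] by simp
  next
    case False
    thus ?thesis using that[of 1] by simp
  qed
  have cy1: "coprime y1 ((int p)^k)" using y(1) by simp
  obtain u where u: "[y1*u = 1] (mod (int p)^k)" using cong_solve_coprime_int[OF cy1] by blast
  have cu: "coprime u (int p)"
  proof (cases k)
    case 0
    then show ?thesis using k by simp
  next
    case (Suc k')
    have "[y1*u = 1] (mod int p)"
      using u Suc by (metis cong_dvd_modulus dvd_power le_add1 of_nat_0_less_iff plus_1_eq_Suc prime_gt_0_int pp Suc_le_eq zero_less_Suc)
    then show ?thesis by (metis coprime_iff_invertible_int mult.commute mult.left_commute coprime_commute)
  qed
  define a1 where "a1 = (t - a2*y2) * u"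
  have "coprime (t - a2*y2) (int p)" using a2(2) prime_imp_coprime[OF pp] coprime_commute by blast
  hence ca1: "coprime a1 (int p)" unfolding a1_def using cu by simp
  have c1: "[(t - a2*y2)*(y1*u) = (t - a2*y2)*1] (mod (int p)^k)" using cong_scalar_left[OF u] .
  have "a1*y1 = (t - a2*y2)*(y1*u)" unfolding a1_def by (simp add: algebra_simps)
  hence "[a1*y1 + a2*y2 = (t - a2*y2)*1 + a2*y2] (mod (int p)^k)"
    using c1 by (intro cong_add cong_refl) (simp only:)
  hence "[a1*y1 + a2*y2 = t] (mod (int p)^k)" by simp
  thus ?thesis using ca1 a2(1) by blast
qed



lemma GS:
  fixes p q c :: nat
  assumes p: "prime p" and q: "prime q" and pq: "p \<noteq> q" and c: "coprime c p"
  shows "gen_symbol c (p^2*q) = Legendre (int c) (int q)"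
proof -
  have PF: "prime_factors (p^2*q) = {p, q}"
    using p q by (auto simp: prime_factors_product prime_factors_power prime_prime_factors)
  have npq: "\<not> p dvd q" using p q pq primes_dvd_imp_eq by blast
  have nqp: "\<not> q dvd p^2" using p q pq by (metis prime_dvd_power primes_dvd_imp_eq)
  have M1: "multiplicity p (p^2*q) = 2"
  proof -
    have "multiplicity p (q * p^2) = multiplicity p (p^2)"
      using p npq by (intro multiplicity_prime_elem_times_other) auto
    also have "\<dots> = 2" using p by (simp add: multiplicity_prime_power)
    finally show ?thesis by (simp add: mult.commute)
  qed
  have M2: "multiplicity q (p^2*q) = 1"
  proof -
    have "multiplicity q (p^2 * q) = multiplicity q q"
      using q nqp by (intro multiplicity_prime_elem_times_other) auto
    also have "\<dots> = 1" using q by simp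
    finally show ?thesis .
  qed
  have ndvd: "\<not> int p dvd int c" using c p
    by (metis coprime_absorb_right coprime_commute int_dvd_int_iff not_prime_unit)
  hence "Legendre (int c) (int p) \<noteq> 0" by (simp add: Leg_zero_iff)
  hence L2: "Legendre (int c) (int p) ^ 2 = 1" using Leg_vals[of "int c" "int p"] by auto
  show ?thesis unfolding gen_symbol_def PF using pq M1 M2 L2 by simp
qed

lemma extend2:
  fixes f :: "nat \<Rightarrow> int" and P Q :: "int \<Rightarrow> bool"
  assumes I: "finite I" "i\<in>I" "j\<in>I" "i\<noteq>j" and P1: "P 1" and Qs: "Q (- (\<Sum>l\<in>I-{i,j}. f l))"
    and H: "\<And>t. Q t \<Longrightarrow> \<exists>a1 a2. P a1 \<and> P a2 \<and> [a1 * f i + a2 * f j = t] (mod m)"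
  shows "\<exists>a. (\<forall>l\<in>I. P (a l)) \<and> [(\<Sum>l\<in>I. a l * f l) = 0] (mod m)"
proof -
  define s where "s = (\<Sum>l\<in>I-{i,j}. f l)"
  obtain a1 a2 where a: "P a1" "P a2" "[a1 * f i + a2 * f j = - s] (mod m)" using H Qs s_def by blast
  define a where "a = (\<lambda>l. if l = i then a1 else if l = j then a2 else 1)"
  have "(\<Sum>l\<in>I. a l * f l) = (\<Sum>l\<in>{i,j}. a l * f l) + (\<Sum>l\<in>I-{i,j}. a l * f l)"
    using I by (subst sum.subset_diff[of "{i,j}"]) auto
  also have "(\<Sum>l\<in>{i,j}. a l * f l) = a1 * f i + a2 * f j" using I unfolding a_def by simp
  also have "(\<Sum>l\<in>I-{i,j}. a l * f l) = s" unfolding s_def a_def by (intro sum.cong) auto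
  finally have E: "(\<Sum>l\<in>I. a l * f l) = a1 * f i + a2 * f j + s" .
  have "[a1 * f i + a2 * f j + s = - s + s] (mod m)" using a(3) by (intro cong_add cong_refl)
  hence "[(\<Sum>l\<in>I. a l * f l) = 0] (mod m)" unfolding E by simp
  moreover have "\<forall>l\<in>I. P (a l)" unfolding a_def using a P1 by auto
  ultimately show ?thesis by blast
qed

lemma extend3:
  fixes f :: "nat \<Rightarrow> int" and P :: "int \<Rightarrow> bool"
  assumes I: "finite I" "i\<in>I" "j\<in>I" "k\<in>I" "i\<noteq>j" "i\<noteq>k" "j\<noteq>k" and P1: "P 1"
    and H: "\<And>t. \<exists>a1 a2 a3. P a1 \<and> P a2 \<and> P a3 \<and> [a1 * f i + a2 * f j + a3 * f k = t] (mod m)"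
  shows "\<exists>a. (\<forall>l\<in>I. P (a l)) \<and> [(\<Sum>l\<in>I. a l * f l) = 0] (mod m)"
proof -
  define s where "s = (\<Sum>l\<in>I-{i,j,k}. f l)"
  obtain a1 a2 a3 where a: "P a1" "P a2" "P a3" "[a1 * f i + a2 * f j + a3 * f k = - s] (mod m)" using H by blast
  define a where "a = (\<lambda>l. if l = i then a1 else if l = j then a2 else if l = k then a3 else 1)"
  have "(\<Sum>l\<in>I. a l * f l) = (\<Sum>l\<in>{i,j,k}. a l * f l) + (\<Sum>l\<in>I-{i,j,k}. a l * f l)"
    using I by (subst sum.subset_diff[of "{i,j,k}"]) auto
  also have "(\<Sum>l\<in>{i,j,k}. a l * f l) = a1 * f i + a2 * f j + a3 * f k" using I unfolding a_def by simp
  also have "(\<Sum>l\<in>I-{i,j,k}. a l * f l) = s" unfolding s_def a_def by (intro sum.cong) auto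
  finally have E: "(\<Sum>l\<in>I. a l * f l) = a1 * f i + a2 * f j + a3 * f k + s" .
  have "[a1 * f i + a2 * f j + a3 * f k + s = - s + s] (mod m)" using a(4) by (intro cong_add cong_refl)
  hence "[(\<Sum>l\<in>I. a l * f l) = 0] (mod m)" unfolding E by simp
  moreover have "\<forall>l\<in>I. P (a l)" unfolding a_def using a P1 by auto
  ultimately show ?thesis by blast
qed



lemma dvd_sub_cancel:
  fixes m x y :: int
  assumes "m dvd x" "m dvd x - y"
  shows "m dvd y"
proof -
  have "m dvd x - (x - y)" using assms by (rule dvd_diff)
  thus ?thesis by simp
qed

lemma SUFF:
  fixes p q :: nat and xs :: "nat list" and I :: "nat set" and a b :: "nat \<Rightarrow> int"
  assumes p: "prime p" and q: "prime q" and pq: "p \<noteq> q"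
    and I: "I \<subseteq> {..<length xs}" "I \<noteq> {}"
    and A: "\<forall>l\<in>I. coprime (a l) (int p)" "[(\<Sum>l\<in>I. a l * int (xs!l)) = 0] (mod (int p)^2)"
    and B: "\<forall>l\<in>I. Legendre (b l) (int q) = 1" "[(\<Sum>l\<in>I. b l * int (xs!l)) = 0] (mod int q)"
  shows "has_weighted_zs_subseq (p^2*q) (S_set (p^2*q)) xs"
proof -
  define n where "n = p^2*q"
  have cop: "coprime (p^2) q" using p q pq by (simp add: primes_coprime)
  have p0: "p^2 \<noteq> 0" "q \<noteq> 0" using p q by auto
  have "\<exists>c. c < n \<and> [c = nat (a l mod (int p)^2)] (mod p^2) \<and> [c = nat (b l mod int q)] (mod q)" for l
    using binary_chinese_remainder_unique_nat[OF cop p0, of "nat (a l mod (int p)^2)" "nat (b l mod int q)"]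
    unfolding n_def by blast
  hence "\<forall>l. \<exists>c. c < n \<and> [c = nat (a l mod (int p)^2)] (mod p^2) \<and> [c = nat (b l mod int q)] (mod q)" by blast
  hence "\<exists>c. \<forall>l. c l < n \<and> [c l = nat (a l mod (int p)^2)] (mod p^2) \<and> [c l = nat (b l mod int q)] (mod q)"
    by (rule choice)
  then obtain c where c0: "\<forall>l. c l < n \<and> [c l = nat (a l mod (int p)^2)] (mod p^2) \<and> [c l = nat (b l mod int q)] (mod q)"
    by blast
  have c: "\<And>l. c l < n" "\<And>l. [c l = nat (a l mod (int p)^2)] (mod p^2)"
      "\<And>l. [c l = nat (b l mod int q)] (mod q)" using c0 by auto
  have ca: "[int (c l) = a l] (mod (int p)^2)" for l
  proof -
    have h1: "[int (c l) = int (nat (a l mod (int p)^2))] (mod int (p^2))"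
      by (rule cong_int_iff[THEN iffD2, OF c(2)[of l]])
    have h2: "int (nat (a l mod (int p)^2)) = a l mod (int p)^2" using p0 by simp
    have h3: "[int (c l) = a l mod (int p)^2] (mod (int p)^2)" using h1 unfolding h2 of_nat_power .
    have h4: "[a l mod (int p)^2 = a l] (mod (int p)^2)" by (simp add: cong_def)
    show ?thesis using cong_trans[OF h3 h4] .
  qed
  have cb: "[int (c l) = b l] (mod int q)" for l
  proof -
    have h1: "[int (c l) = int (nat (b l mod int q))] (mod int q)"
      by (rule cong_int_iff[THEN iffD2, OF c(3)[of l]])
    have h2: "int (nat (b l mod int q)) = b l mod int q" using p0 by simp
    have h3: "[int (c l) = b l mod int q] (mod int q)" using h1 unfolding h2 of_nat_power .
    have h4: "[b l mod int q = b l] (mod int q)" by (simp add: cong_def)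
    show ?thesis using cong_trans[OF h3 h4] .
  qed
  have cS: "c l \<in> S_set n" if l: "l \<in> I" for l
  proof -
    have "\<not> p dvd c l"
    proof
      assume "p dvd c l"
      hence d1: "int p dvd int (c l)" by simp
      have "int p dvd (int p)^2" by simp
      hence "int p dvd int (c l) - a l" using cong_dvdD[OF ca[of l]] dvd_trans by blast
      hence "int p dvd a l" using d1 dvd_sub_cancel by blast
      hence "is_unit (int p)" using A(1) l coprime_common_divisor[of "a l" "int p" "int p"] by simp
      thus False using p by simp
    qed
    hence cp: "coprime (c l) p" using prime_imp_coprime[OF p] coprime_commute by blast
    have "\<not> q dvd c l"
    proof
      assume "q dvd c l"
      hence d1: "int q dvd int (c l)" by simp
      hence "int q dvd b l" using cong_dvdD[OF cb[of l]] dvd_sub_cancel by blast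
      hence "Legendre (b l) (int q) = 0" by (simp add: Leg_zero_iff)
      thus False using B(1) l by simp
    qed
    hence cq: "coprime (c l) q" using prime_imp_coprime[OF q] coprime_commute by blast
    have "coprime (c l) n" unfolding n_def using cp cq by simp
    moreover have "gen_symbol (c l) n = 1"
      unfolding n_def using GS[OF p q pq cp] Leg_cong[OF cb[of l]] B(1) l by simp
    ultimately show ?thesis unfolding S_set_def using c(1)[of l] by simp
  qed
  have fin: "finite I" using I(1) finite_subset by blast
  have sumint: "int (\<Sum>l\<in>I. c l * xs!l) = (\<Sum>l\<in>I. int (c l) * int (xs!l))" by simp
  have "[(\<Sum>l\<in>I. int (c l) * int (xs!l)) = (\<Sum>l\<in>I. a l * int (xs!l))] (mod (int p)^2)"
    using ca by (intro cong_sum cong_mult cong_refl)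
  hence "[(\<Sum>l\<in>I. int (c l) * int (xs!l)) = 0] (mod (int p)^2)" using A(2) cong_trans by blast
  hence D1: "(int p)^2 dvd int (\<Sum>l\<in>I. c l * xs!l)" unfolding sumint by (simp add: cong_0_iff)
  have "[(\<Sum>l\<in>I. int (c l) * int (xs!l)) = (\<Sum>l\<in>I. b l * int (xs!l))] (mod int q)"
    using cb by (intro cong_sum cong_mult cong_refl)
  hence "[(\<Sum>l\<in>I. int (c l) * int (xs!l)) = 0] (mod int q)" using B(2) cong_trans by blast
  hence D2: "int q dvd int (\<Sum>l\<in>I. c l * xs!l)" unfolding sumint by (simp add: cong_0_iff)
  have "p^2 dvd (\<Sum>l\<in>I. c l * xs!l)" using D1 by (metis int_dvd_int_iff of_nat_power)
  moreover have "q dvd (\<Sum>l\<in>I. c l * xs!l)" using D2 by (simp only: int_dvd_int_iff)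
  ultimately have "p^2 * q dvd (\<Sum>l\<in>I. c l * xs!l)" using cop by (rule divides_mult)
  hence "(\<Sum>l\<in>I. c l * xs!l) mod n = 0" unfolding n_def by simp
  hence "I \<subseteq> {..<length xs} \<and> I \<noteq> {} \<and> (\<forall>i\<in>I. c i \<in> S_set n) \<and> (\<Sum>i\<in>I. c i * xs ! i) mod n = 0"
    using I cS by simp
  hence "\<exists>I a. I \<subseteq> {..<length xs} \<and> I \<noteq> {} \<and> (\<forall>i\<in>I. a i \<in> S_set n) \<and> (\<Sum>i\<in>I. a i * xs ! i) mod n = 0"
    by (intro exI)
  thus ?thesis unfolding has_weighted_zs_subseq_def n_def .
qed



lemma two_elems:
  assumes "finite S" "2 \<le> card S"
  shows "\<exists>i j. i \<in> S \<and> j \<in> S \<and> i \<noteq> j"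
proof -
  obtain i where i: "i \<in> S" using assms by fastforce
  have "card (S - {i}) \<ge> 1" using assms i by simp
  hence "S - {i} \<noteq> {}" by (metis card.empty not_one_le_zero)
  then obtain j where "j \<in> S - {i}" by blast
  thus ?thesis using i by blast
qed

lemma three_elems:
  assumes "finite S" "3 \<le> card S"
  shows "\<exists>i j k. i \<in> S \<and> j \<in> S \<and> k \<in> S \<and> i \<noteq> j \<and> i \<noteq> k \<and> j \<noteq> k"
proof -
  obtain i where i: "i \<in> S" using assms by fastforce
  have "card (S - {i}) \<ge> 2" using assms i by simp
  then obtain j k where "j \<in> S - {i}" "k \<in> S - {i}" "j \<noteq> k" using two_elems[of "S - {i}"] assms by auto
  thus ?thesis using i by blast
qed

lemma alphaZ:
  fixes f :: "nat \<Rightarrow> int"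
  assumes "\<forall>l\<in>I. (int p)^2 dvd f l"
  shows "\<exists>a. (\<forall>l\<in>I. coprime (a l) (int p)) \<and> [(\<Sum>l\<in>I. a l * f l) = 0] (mod (int p)^2)"
proof -
  have "(int p)^2 dvd (\<Sum>l\<in>I. 1 * f l)" using assms by (intro dvd_sum) simp
  hence "[(\<Sum>l\<in>I. 1 * f l) = 0] (mod (int p)^2)" by (simp only: cong_0_iff)
  thus ?thesis by (intro exI[of _ "\<lambda>_. 1"]) simp
qed

lemma betaW:
  fixes f :: "nat \<Rightarrow> int" and q :: nat
  assumes "q > 1" "\<forall>l\<in>I. int q dvd f l"
  shows "\<exists>b. (\<forall>l\<in>I. Legendre (b l) (int q) = 1) \<and> [(\<Sum>l\<in>I. b l * f l) = 0] (mod int q)"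
proof -
  have "int q dvd (\<Sum>l\<in>I. 1 * f l)" using assms by (intro dvd_sum) simp
  hence "[(\<Sum>l\<in>I. 1 * f l) = 0] (mod int q)" by (simp only: cong_0_iff)
  moreover have "Legendre 1 (int q) = 1" using Leg_one assms by simp
  ultimately show ?thesis by (intro exI[of _ "\<lambda>_. 1"]) simp
qed

lemma alphaU:
  fixes f :: "nat \<Rightarrow> int" and p :: nat
  assumes p: "prime p" "p \<ge> 3" and I: "finite I" "i \<in> I" "j \<in> I" "i \<noteq> j"
    and c: "coprime (f i) (int p)" "coprime (f j) (int p)"
  shows "\<exists>a. (\<forall>l\<in>I. coprime (a l) (int p)) \<and> [(\<Sum>l\<in>I. a l * f l) = 0] (mod (int p)^2)"
proof (rule extend2[OF I, where Q = "\<lambda>_. True"])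
  show "coprime 1 (int p)" by simp
  fix t :: int
  show "\<exists>a1 a2. coprime a1 (int p) \<and> coprime a2 (int p) \<and> [a1 * f i + a2 * f j = t] (mod (int p)^2)"
    using CORE[OF p c, of 2 t] by simp
qed simp

lemma alphaP:
  fixes f :: "nat \<Rightarrow> int" and p :: nat
  assumes p: "prime p" "p \<ge> 3" and I: "finite I" "i \<in> I" "j \<in> I" "i \<noteq> j"
    and d: "\<forall>l\<in>I. int p dvd f l" and nd: "\<not> (int p)^2 dvd f i" "\<not> (int p)^2 dvd f j"
  shows "\<exists>a. (\<forall>l\<in>I. coprime (a l) (int p)) \<and> [(\<Sum>l\<in>I. a l * f l) = 0] (mod (int p)^2)"
proof (rule extend2[OF I, where Q = "\<lambda>t. int p dvd t"])
  show "coprime 1 (int p)" by simp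
  have "int p dvd (\<Sum>l\<in>I - {i, j}. f l)" using d by (intro dvd_sum) simp
  thus "int p dvd - (\<Sum>l\<in>I - {i, j}. f l)" by simp
  have pp: "prime (int p)" using p by simp
  obtain y1 where y1: "f i = int p * y1" using d I by (meson dvdE)
  obtain y2 where y2: "f j = int p * y2" using d I by (meson dvdE)
  have ny1: "\<not> int p dvd y1" using nd(1) y1 by (auto simp: power2_eq_square)
  have ny2: "\<not> int p dvd y2" using nd(2) y2 by (auto simp: power2_eq_square)
  have cy1: "coprime y1 (int p)" using ny1 prime_imp_coprime[OF pp] coprime_commute by blast
  have cy2: "coprime y2 (int p)" using ny2 prime_imp_coprime[OF pp] coprime_commute by blast
  fix t :: int
  assume "int p dvd t"
  then obtain t' where t': "t = int p * t'" by (meson dvdE)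
  obtain a1 a2 where a: "coprime a1 (int p)" "coprime a2 (int p)" "[a1*y1 + a2*y2 = t'] (mod (int p)^1)"
    using CORE[OF p cy1 cy2, of 1 t'] by auto
  have "int p dvd (a1*y1 + a2*y2 - t')" using cong_dvdD[OF a(3)] by simp
  hence "int p * int p dvd int p * (a1*y1 + a2*y2 - t')" by (rule mult_dvd_mono[OF dvd_refl])
  moreover have "int p * (a1*y1 + a2*y2 - t') = a1 * f i + a2 * f j - t" using y1 y2 t'
    by (simp add: algebra_simps)
  ultimately have "(int p)^2 dvd a1 * f i + a2 * f j - t" by (simp add: power2_eq_square)
  hence "[a1 * f i + a2 * f j = t] (mod (int p)^2)" by (rule cong_dvdI)
  thus "\<exists>a1 a2. coprime a1 (int p) \<and> coprime a2 (int p) \<and> [a1 * f i + a2 * f j = t] (mod (int p)^2)"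
    using a by blast
qed

lemma betaN:
  fixes f :: "nat \<Rightarrow> int" and q :: nat
  assumes q: "prime q" "q \<ge> 7" and I: "finite I" "i\<in>I" "j\<in>I" "k\<in>I" "i\<noteq>j" "i\<noteq>k" "j\<noteq>k"
    and nd: "\<not> int q dvd f i" "\<not> int q dvd f j" "\<not> int q dvd f k"
  shows "\<exists>b. (\<forall>l\<in>I. Legendre (b l) (int q) = 1) \<and> [(\<Sum>l\<in>I. b l * f l) = 0] (mod int q)"
proof (rule extend3[OF I])
  show "Legendre 1 (int q) = 1" using Leg_one q by simp
  fix t
  show "\<exists>a1 a2 a3. Legendre a1 (int q) = 1 \<and> Legendre a2 (int q) = 1 \<and> Legendre a3 (int q) = 1 \<and>
          [a1 * f i + a2 * f j + a3 * f k = t] (mod int q)"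
    using B3[OF q nd, of t] by blast
qed



lemma UB:
  fixes p q :: nat and xs :: "nat list"
  assumes p: "prime p" "p \<ge> 7" and q: "prime q" "q \<ge> 7" and pq: "p \<noteq> q" and len: "length xs = 5"
  shows "has_weighted_zs_subseq (p^2*q) (S_set (p^2*q)) xs"
proof -
  define f where "f l = int (xs!l)" for l
  define X where "X = {..<5::nat}"
  have p3: "p \<ge> 3" using p by simp
  have q1: "q > 1" using q by simp
  have finX: "finite X" and cX: "card X = 5" unfolding X_def by simp_all
  have SU: "has_weighted_zs_subseq (p^2*q) (S_set (p^2*q)) xs"
    if I: "I \<subseteq> X" "I \<noteq> {}"
    and A: "\<exists>a. (\<forall>l\<in>I. coprime (a l) (int p)) \<and> [(\<Sum>l\<in>I. a l * f l) = 0] (mod (int p)^2)"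
    and B: "\<exists>b. (\<forall>l\<in>I. Legendre (b l) (int q) = 1) \<and> [(\<Sum>l\<in>I. b l * f l) = 0] (mod int q)"
    for I
  proof -
    obtain a where a: "\<forall>l\<in>I. coprime (a l) (int p)" "[(\<Sum>l\<in>I. a l * int (xs!l)) = 0] (mod (int p)^2)"
      using A unfolding f_def by blast
    obtain b where b: "\<forall>l\<in>I. Legendre (b l) (int q) = 1" "[(\<Sum>l\<in>I. b l * int (xs!l)) = 0] (mod int q)"
      using B unfolding f_def by blast
    have I': "I \<subseteq> {..<length xs}" using I(1) len unfolding X_def by simp
    show ?thesis by (rule SUFF[OF p(1) q(1) pq I' I(2) a b])
  qed
  show ?thesis
  proof (cases "\<exists>l\<in>X. (int p)^2 dvd f l \<and> int q dvd f l")
    case True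
    then obtain l where l: "l \<in> X" "(int p)^2 dvd f l" "int q dvd f l" by blast
    show ?thesis
      by (rule SU[of "{l}"]) (use l alphaZ[of "{l}" p f] betaW[OF q1, of "{l}" f] in auto)
  next
    case False
    hence noZW: "\<And>l. l \<in> X \<Longrightarrow> (int p)^2 dvd f l \<Longrightarrow> \<not> int q dvd f l" by blast
    have copI: "coprime (f l) (int p)" if "\<not> int p dvd f l" for l
      using that prime_imp_coprime[of "int p" "f l"] p coprime_commute by auto
    define W where "W = {l\<in>X. int q dvd f l}"
    define Ut where "Ut = {l. \<not> int p dvd f l}"
    have finW: "finite W" unfolding W_def using finX by simp
    show ?thesis
    proof (cases "card W \<ge> 3")
      case True
      have "card W = card (W \<inter> Ut) + card (W - Ut)" using card_Int_Diff[OF finW] .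
      hence "card (W \<inter> Ut) \<ge> 2 \<or> card (W - Ut) \<ge> 2" using True by linarith
      thus ?thesis
      proof
        assume "card (W \<inter> Ut) \<ge> 2"
        then obtain i j where ij: "i \<in> W \<inter> Ut" "j \<in> W \<inter> Ut" "i \<noteq> j"
          using two_elems[of "W \<inter> Ut"] finW by auto
        show ?thesis
        proof (rule SU[of "{i,j}"])
          show "{i,j} \<subseteq> X" using ij unfolding W_def by auto
          show "{i,j} \<noteq> {}" by simp
          show "\<exists>a. (\<forall>l\<in>{i,j}. coprime (a l) (int p)) \<and> [(\<Sum>l\<in>{i,j}. a l * f l) = 0] (mod (int p)^2)"
            using ij by (intro alphaU[OF p(1) p3, where i=i and j=j]) (auto simp: Ut_def intro: copI)
          show "\<exists>b. (\<forall>l\<in>{i,j}. Legendre (b l) (int q) = 1) \<and> [(\<Sum>l\<in>{i,j}. b l * f l) = 0] (mod int q)"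
            using ij by (intro betaW[OF q1]) (auto simp: W_def)
        qed
      next
        assume "card (W - Ut) \<ge> 2"
        then obtain i j where ij: "i \<in> W - Ut" "j \<in> W - Ut" "i \<noteq> j"
          using two_elems[of "W - Ut"] finW by auto
        have nZ: "\<not> (int p)^2 dvd f i" "\<not> (int p)^2 dvd f j" using ij noZW unfolding W_def by auto
        show ?thesis
        proof (rule SU[of "{i,j}"])
          show "{i,j} \<subseteq> X" using ij unfolding W_def by auto
          show "{i,j} \<noteq> {}" by simp
          show "\<exists>a. (\<forall>l\<in>{i,j}. coprime (a l) (int p)) \<and> [(\<Sum>l\<in>{i,j}. a l * f l) = 0] (mod (int p)^2)"
            using ij nZ by (intro alphaP[OF p(1) p3, of "{i,j}" i j]) (auto simp: Ut_def)
          show "\<exists>b. (\<forall>l\<in>{i,j}. Legendre (b l) (int q) = 1) \<and> [(\<Sum>l\<in>{i,j}. b l * f l) = 0] (mod int q)"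
            using ij by (intro betaW[OF q1]) (auto simp: W_def)
        qed
      qed
    next
      case False
      define N where "N = X - W"
      have "card N = card X - card W" unfolding N_def using finW by (intro card_Diff_subset) (auto simp: W_def)
      hence cN: "card N \<ge> 3" using False cX by simp
      have finN: "finite N" unfolding N_def using finX by simp
      have Nnd: "\<And>l. l \<in> N \<Longrightarrow> \<not> int q dvd f l" unfolding N_def W_def by auto
      define U where "U = X \<inter> Ut"
      have finU: "finite U" unfolding U_def using finX by simp
      show ?thesis
      proof (cases "card U \<ge> 2")
        case True
        then obtain i j where ij: "i \<in> U" "j \<in> U" "i \<noteq> j" using two_elems[OF finU] by auto
        obtain i' j' k' where ijk: "i' \<in> N" "j' \<in> N" "k' \<in> N" "i' \<noteq> j'" "i' \<noteq> k'" "j' \<noteq> k'"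
          using three_elems[OF finN cN] by blast
        show ?thesis
        proof (rule SU[of X])
          show "X \<subseteq> X" by simp
          show "X \<noteq> {}" using cX by auto
          show "\<exists>a. (\<forall>l\<in>X. coprime (a l) (int p)) \<and> [(\<Sum>l\<in>X. a l * f l) = 0] (mod (int p)^2)"
            using ij by (intro alphaU[OF p(1) p3 finX, where i=i and j=j]) (auto simp: U_def Ut_def intro: copI)
          show "\<exists>b. (\<forall>l\<in>X. Legendre (b l) (int q) = 1) \<and> [(\<Sum>l\<in>X. b l * f l) = 0] (mod int q)"
            using ijk Nnd by (intro betaN[OF q finX, where i=i' and j=j' and k=k']) (auto simp: N_def)
        qed
      next
        case False
        define Y where "Y = X - U"
        have "card Y = card X - card U" unfolding Y_def using finU by (intro card_Diff_subset) (auto simp: U_def)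
        hence cY: "card Y \<ge> 4" using False cX by simp
        have finY: "finite Y" unfolding Y_def using finX by simp
        have Yp: "\<And>l. l \<in> Y \<Longrightarrow> int p dvd f l" unfolding Y_def U_def Ut_def by auto
        have YX: "Y \<subseteq> X" unfolding Y_def by auto
        have "card Y = card (Y \<inter> W) + card (Y - W)" using card_Int_Diff[OF finY] .
        show ?thesis
        proof (cases "card (Y \<inter> W) \<ge> 2")
          case True
          then obtain i j where ij: "i \<in> Y \<inter> W" "j \<in> Y \<inter> W" "i \<noteq> j"
            using two_elems[of "Y \<inter> W"] finY by auto
          have nZ: "\<not> (int p)^2 dvd f i" "\<not> (int p)^2 dvd f j" using ij noZW unfolding W_def by auto
          show ?thesis
          proof (rule SU[of "{i,j}"])
            show "{i,j} \<subseteq> X" using ij YX by auto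
            show "{i,j} \<noteq> {}" by simp
            show "\<exists>a. (\<forall>l\<in>{i,j}. coprime (a l) (int p)) \<and> [(\<Sum>l\<in>{i,j}. a l * f l) = 0] (mod (int p)^2)"
              using ij nZ Yp by (intro alphaP[OF p(1) p3, where i=i and j=j]) auto
            show "\<exists>b. (\<forall>l\<in>{i,j}. Legendre (b l) (int q) = 1) \<and> [(\<Sum>l\<in>{i,j}. b l * f l) = 0] (mod int q)"
              using ij by (intro betaW[OF q1]) (auto simp: W_def)
          qed
        next
          case False
          hence cYN: "card (Y - W) \<ge> 3" using \<open>card Y = card (Y \<inter> W) + card (Y - W)\<close> cY by linarith
          have finYN: "finite (Y - W)" using finY by simp
          obtain i' j' k' where ijk: "i' \<in> Y - W" "j' \<in> Y - W" "k' \<in> Y - W" "i' \<noteq> j'" "i' \<noteq> k'" "j' \<noteq> k'"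
            using three_elems[OF finYN cYN] by blast
          have YWnd: "\<And>l. l \<in> Y - W \<Longrightarrow> \<not> int q dvd f l" using YX unfolding W_def by auto
          have Yne: "Y \<noteq> {}" using cY by auto
          define YP where "YP = {l\<in>Y. \<not> (int p)^2 dvd f l}"
          have finYP: "finite YP" unfolding YP_def using finY by simp
          have betaY: "\<exists>b. (\<forall>l\<in>Y. Legendre (b l) (int q) = 1) \<and> [(\<Sum>l\<in>Y. b l * f l) = 0] (mod int q)"
            using ijk YWnd by (intro betaN[OF q finY, where i=i' and j=j' and k=k']) auto
          show ?thesis
          proof (cases "card YP = 1")
            case False
            show ?thesis
            proof (rule SU[of Y])
              show "Y \<subseteq> X" using YX .
              show "Y \<noteq> {}" using Yne .
              show "\<exists>b. (\<forall>l\<in>Y. Legendre (b l) (int q) = 1) \<and> [(\<Sum>l\<in>Y. b l * f l) = 0] (mod int q)"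
                using betaY .
              show "\<exists>a. (\<forall>l\<in>Y. coprime (a l) (int p)) \<and> [(\<Sum>l\<in>Y. a l * f l) = 0] (mod (int p)^2)"
              proof (cases "card YP = 0")
                case True
                hence "YP = {}" using finYP by simp
                hence "\<forall>l\<in>Y. (int p)^2 dvd f l" unfolding YP_def by auto
                thus ?thesis by (rule alphaZ)
              next
                case False
                hence "card YP \<ge> 2" using \<open>card YP \<noteq> 1\<close> by linarith
                then obtain i j where ij: "i \<in> YP" "j \<in> YP" "i \<noteq> j" using two_elems[OF finYP] by auto
                show ?thesis using ij Yp by (intro alphaP[OF p(1) p3 finY, where i=i and j=j]) (auto simp: YP_def)
              qed
            qed
          next
            case True
            then obtain y0 where y0: "YP = {y0}" using card_1_singleton_iff[of YP] by auto
            define I where "I = Y - YP"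
            have finI: "finite I" unfolding I_def using finY by simp
            have IZ: "\<forall>l\<in>I. (int p)^2 dvd f l" unfolding I_def YP_def by auto
            have IN: "\<And>l. l \<in> I \<Longrightarrow> \<not> int q dvd f l" using IZ noZW YX unfolding I_def by auto
            have "card I = card Y - card YP" unfolding I_def using finYP by (intro card_Diff_subset) (auto simp: YP_def)
            hence cI: "card I \<ge> 3" using cY True by simp
            obtain i j k where ijk2: "i \<in> I" "j \<in> I" "k \<in> I" "i \<noteq> j" "i \<noteq> k" "j \<noteq> k"
              using three_elems[OF finI cI] by blast
            show ?thesis
            proof (rule SU[of I])
              show "I \<subseteq> X" using YX unfolding I_def by auto
              show "I \<noteq> {}" using ijk2 by auto
              show "\<exists>a. (\<forall>l\<in>I. coprime (a l) (int p)) \<and> [(\<Sum>l\<in>I. a l * f l) = 0] (mod (int p)^2)"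
                using IZ by (rule alphaZ)
              show "\<exists>b. (\<forall>l\<in>I. Legendre (b l) (int q) = 1) \<and> [(\<Sum>l\<in>I. b l * f l) = 0] (mod int q)"
                using ijk2 IN by (intro betaN[OF q finI, where i=i and j=j and k=k]) auto
            qed
          qed
        qed
      qed
    qed
  qed
qed



lemma cop_ndvd:
  fixes x p :: nat
  assumes "prime p" "coprime x p"
  shows "\<not> p dvd x"
proof
  assume "p dvd x"
  hence "is_unit p" using coprime_common_divisor[of x p p] assms(2) by simp
  thus False using assms(1) by simp
qed

lemma LB:
  fixes p q :: nat
  assumes p: "prime p" "p \<ge> 7" and q: "prime q" "q \<ge> 7" and pq: "p \<noteq> q"
  shows "\<exists>xs. length xs = 4 \<and> set xs \<subseteq> {0..<p^2*q} \<and> \<not> has_weighted_zs_subseq (p^2*q) (S_set (p^2*q)) xs"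
proof -
  have q2: "q > 2" using q by simp
  have pp: "prime (int p)" and qq: "prime (int q)" using p q by simp_all
  obtain g where g: "Legendre g (int q) = -1" using NR_exists[OF q(1) q2] by blast
  define r where "r = nat (g mod int q)"
  have ir: "int r = g mod int q" unfolding r_def using q2 by simp
  have "[g = int r] (mod int q)" unfolding ir by (simp add: cong_def)
  hence "Legendre g (int q) = Legendre (int r) (int q)" by (rule Leg_cong)
  hence Lr: "Legendre (int r) (int q) = -1" using g by simp
  have r0: "r > 0"
  proof (rule ccontr)
    assume "\<not> r > 0"
    hence "Legendre (int r) (int q) = 0" by (simp add: Leg_zero_iff)
    thus False using Lr by simp
  qed
  have "g mod int q < int q" using q2 by simp
  hence "int r < int q" using ir by simp
  hence rq: "r < q" by simp
  define xs where "xs = [q, p*q, p^2, (q-r)*p^2]"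
  have len: "length xs = 4" unfolding xs_def by simp
  have p1: "p > 1" using p by simp
  have bnd: "set xs \<subseteq> {0..<p^2*q}"
  proof -
    have pp2: "1 < p^2" using one_less_power[OF p1, of 2] by simp
    have "q < p^2*q" using pp2 q2 by simp
    moreover have "p*q < p^2*q" using p1 q2 by (simp add: power2_eq_square)
    moreover have "p^2 < p^2*q" using p1 q2 by simp
    moreover have "(q-r)*p^2 < q*p^2" using r0 rq p1 by simp
    ultimately show ?thesis unfolding xs_def by (auto simp: mult.commute)
  qed
  have notzs: "\<not> has_weighted_zs_subseq (p^2*q) (S_set (p^2*q)) xs"
  proof
    assume "has_weighted_zs_subseq (p^2*q) (S_set (p^2*q)) xs"
    hence "\<exists>I a. I \<subseteq> {..<length xs} \<and> I \<noteq> {} \<and> (\<forall>i\<in>I. a i \<in> S_set (p^2*q)) \<and>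
            (\<Sum>i\<in>I. a i * xs ! i) mod (p^2*q) = 0" by (simp only: has_weighted_zs_subseq_def)
    then obtain I a where H: "I \<subseteq> {..<length xs} \<and> I \<noteq> {} \<and> (\<forall>i\<in>I. a i \<in> S_set (p^2*q)) \<and>
            (\<Sum>i\<in>I. a i * xs ! i) mod (p^2*q) = 0" by (elim exE)
    have I: "I \<subseteq> {..<4}" "I \<noteq> {}" using H len by simp_all
    have aS: "\<forall>i\<in>I. a i \<in> S_set (p^2*q)" using H by simp
    have sm: "(\<Sum>i\<in>I. a i * xs ! i) mod (p^2*q) = 0" using H by simp
    have aprop: "\<not> int p dvd int (a k) \<and> \<not> int q dvd int (a k) \<and> Legendre (int (a k)) (int q) = 1"
      if k: "k \<in> I" for k
    proof -
      have c: "coprime (a k) (p^2*q)" "gen_symbol (a k) (p^2*q) = 1" using aS k unfolding S_set_def by auto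
      hence cp: "coprime (a k) p" and cq: "coprime (a k) q" by auto
      have "\<not> p dvd a k" using cop_ndvd[OF p(1) cp] .
      moreover have "\<not> q dvd a k" using cop_ndvd[OF q(1) cq] .
      moreover have "Legendre (int (a k)) (int q) = 1" using GS[OF p(1) q(1) pq cp] c(2) by simp
      ultimately show ?thesis by simp
    qed
    define e where "e k = (if k \<in> I then int (a k) else 0)" for k
    have e0: "\<And>k. k \<notin> I \<Longrightarrow> e k = 0" unfolding e_def by simp
    have e1: "\<And>k. k \<in> I \<Longrightarrow> \<not> int p dvd e k \<and> \<not> int q dvd e k \<and> Legendre (e k) (int q) = 1"
      unfolding e_def using aprop by simp
    have "int (\<Sum>i\<in>I. a i * xs ! i) = (\<Sum>i\<in>I. int (a i) * int (xs ! i))" by simp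
    also have "\<dots> = (\<Sum>i\<in>{..<4} \<inter> I. int (a i) * int (xs ! i))" using I(1) by (simp add: Int_absorb1)
    also have "\<dots> = (\<Sum>i\<in>{..<4}. e i * int (xs ! i))" unfolding e_def
      by (subst sum.inter_restrict) (auto intro: sum.cong)
    also have "\<dots> = e 0 * int q + e 1 * (int p * int q) + e 2 * (int p)^2 + e 3 * ((int q - int r) * (int p)^2)"
      unfolding xs_def using rq by (simp add: numeral_eq_Suc lessThan_Suc of_nat_diff)
    finally have SE: "int (\<Sum>i\<in>I. a i * xs ! i) = e 0 * int q + e 1 * (int p * int q) + e 2 * (int p)^2 + e 3 * ((int q - int r) * (int p)^2)" .
    have "p^2*q dvd (\<Sum>i\<in>I. a i * xs ! i)" using sm by (rule mod_0_imp_dvd)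
    hence "int (p^2*q) dvd int (\<Sum>i\<in>I. a i * xs ! i)" by (simp only: int_dvd_int_iff)
    hence D: "(int p)^2 * int q dvd int (\<Sum>i\<in>I. a i * xs ! i)" by (simp only: of_nat_mult of_nat_power)
    hence Dq: "int q dvd e 0 * int q + e 1 * (int p * int q) + e 2 * (int p)^2 + e 3 * ((int q - int r) * (int p)^2)"
      unfolding SE using dvd_mult_right by blast
    have "e 0 * int q + e 1 * (int p * int q) + e 2 * (int p)^2 + e 3 * ((int q - int r) * (int p)^2)
        = int q * (e 0 + e 1 * int p + e 3 * (int p)^2) + (int p)^2 * (e 2 - e 3 * int r)"
      by (simp add: algebra_simps)
    hence "int q dvd int q * (e 0 + e 1 * int p + e 3 * (int p)^2) + (int p)^2 * (e 2 - e 3 * int r)" using Dq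
      by simp
    hence "int q dvd (int p)^2 * (e 2 - e 3 * int r)" by (simp add: dvd_add_right_iff)
    moreover have "\<not> int q dvd (int p)^2"
    proof
      assume "int q dvd (int p)^2"
      hence "int q dvd int p" using qq prime_dvd_power by blast
      hence "q dvd p" by simp
      hence "q = p" using primes_dvd_imp_eq q(1) p(1) by blast
      thus False using pq by simp
    qed
    ultimately have Dq2: "int q dvd e 2 - e 3 * int r" using qq by (simp add: prime_dvd_mult_iff)
    have nqr: "\<not> int q dvd int r" using r0 rq using nat_dvd_not_less by auto
    have n2: "2 \<notin> I" and n3: "3 \<notin> I"
    proof -
      have "\<not> (2 \<in> I \<and> 3 \<in> I)"
      proof
        assume "2 \<in> I \<and> 3 \<in> I"
        hence L: "Legendre (e 2) (int q) = 1" "Legendre (e 3) (int q) = 1" using e1 by auto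
        have "[e 2 = e 3 * int r] (mod int q)" using Dq2 by (rule cong_dvdI)
        hence "Legendre (e 2) (int q) = Legendre (e 3 * int r) (int q)" by (rule Leg_cong)
        also have "\<dots> = -1" using Leg_mult[OF q(1) q2] L Lr by simp
        finally show False using L by simp
      qed
      moreover have "\<not> (2 \<in> I \<and> 3 \<notin> I)"
      proof
        assume "2 \<in> I \<and> 3 \<notin> I"
        thus False using Dq2 e1[of 2] e0[of 3] by simp
      qed
      moreover have "\<not> (2 \<notin> I \<and> 3 \<in> I)"
      proof
        assume a23: "2 \<notin> I \<and> 3 \<in> I"
        hence "int q dvd e 3 * int r" using Dq2 e0[of 2] by simp
        thus False using a23 e1[of 3] nqr qq by (simp add: prime_dvd_mult_iff)
      qed
      ultimately show "2 \<notin> I" "3 \<notin> I" by blast+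
    qed
    have Dp: "(int p)^2 dvd e 0 * int q + e 1 * (int p * int q)"
      using D unfolding SE using e0[OF n2] e0[OF n3] dvd_mult_left by simp
    have nqp: "\<not> int p dvd int q" using primes_dvd_imp_eq[OF p(1) q(1)] pq by auto
    have "int p dvd e 0 * int q + e 1 * (int p * int q)" using Dp by (rule dvd_trans[rotated]) simp
    moreover have "int p dvd e 1 * (int p * int q)" by simp
    ultimately have "int p dvd e 0 * int q" by (simp add: dvd_add_left_iff)
    hence "int p dvd e 0" using nqp pp by (simp add: prime_dvd_mult_iff)
    hence n0: "0 \<notin> I" using e1[of 0] by auto
    hence "(int p)^2 dvd e 1 * (int p * int q)" using Dp e0[OF n0] by simp
    hence "int p * int p dvd int p * (e 1 * int q)" by (simp add: power2_eq_square algebra_simps)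
    hence "int p dvd e 1 * int q" using p by simp
    hence "int p dvd e 1" using nqp pp by (simp add: prime_dvd_mult_iff)
    hence n1: "1 \<notin> I" using e1[of 1] by auto
    have "I = {}"
    proof
      show "I \<subseteq> {}"
      proof
        fix k assume k: "k \<in> I"
        hence "k < 4" using I(1) by auto
        hence "k = 0 \<or> k = 1 \<or> k = 2 \<or> k = 3" by auto
        thus "k \<in> {}" using k n0 n1 n2 n3 by auto
      qed
    qed simp
    thus False using I(2) by simp
  qed
  show ?thesis using len bnd notzs by blast
qed



lemma has_take:
  assumes "has_weighted_zs_subseq n A (take k xs)"
  shows "has_weighted_zs_subseq n A xs"
proof -
  obtain I a where H: "I \<subseteq> {..<length (take k xs)} \<and> I \<noteq> {} \<and> (\<forall>i\<in>I. a i \<in> A) \<and>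
            (\<Sum>i\<in>I. a i * take k xs ! i) mod n = 0"
    using assms unfolding has_weighted_zs_subseq_def by (elim exE)
  have I: "I \<subseteq> {..<length xs}" using H by auto
  have "(\<Sum>i\<in>I. a i * take k xs ! i) = (\<Sum>i\<in>I. a i * xs ! i)"
    using H by (intro sum.cong) auto
  hence "I \<subseteq> {..<length xs} \<and> I \<noteq> {} \<and> (\<forall>i\<in>I. a i \<in> A) \<and> (\<Sum>i\<in>I. a i * xs ! i) mod n = 0"
    using H I by simp
  thus ?thesis unfolding has_weighted_zs_subseq_def by (intro exI)
qed

theorem theorem4p5:
  fixes p' q :: nat
  assumes "prime p'" and "prime q" and "p' \<noteq> q" and "p' \<ge> 7" and "q \<ge> 7"
  shows "davenport_weighted (p'^2 * q) (S_set (p'^2 * q)) = 5"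
  unfolding davenport_weighted_def
proof (rule Least_equality)
  show "\<forall>xs. length xs = 5 \<and> set xs \<subseteq> {0..<p'^2 * q} \<longrightarrow> has_weighted_zs_subseq (p'^2 * q) (S_set (p'^2 * q)) xs"
    using UB[OF assms(1,4,2,5,3)] by blast
next
  fix y
  assume Y: "\<forall>xs. length xs = y \<and> set xs \<subseteq> {0..<p'^2 * q} \<longrightarrow> has_weighted_zs_subseq (p'^2 * q) (S_set (p'^2 * q)) xs"
  show "5 \<le> y"
  proof (rule ccontr)
    assume "\<not> 5 \<le> y"
    hence y4: "y \<le> 4" by simp
    obtain xs where xs: "length xs = 4" "set xs \<subseteq> {0..<p'^2*q}" "\<not> has_weighted_zs_subseq (p'^2*q) (S_set (p'^2*q)) xs"
      using LB[OF assms(1,4,2,5,3)] by blast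
    have "length (take y xs) = y" using xs(1) y4 by simp
    moreover have "set (take y xs) \<subseteq> {0..<p'^2*q}" using xs(2) set_take_subset by fastforce
    ultimately have "has_weighted_zs_subseq (p'^2 * q) (S_set (p'^2 * q)) (take y xs)" using Y by blast
    hence "has_weighted_zs_subseq (p'^2 * q) (S_set (p'^2 * q)) xs" by (rule has_take)
    thus False using xs(3) by simp
  qed
qed

end
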